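(* Let $q$ be a prime power and $h$ a nonnegative integer. If $M$ is a matroid and $X\subseteq E(M)$ satisfies $r_M(X)\le h$ and $\mathrm{si}(M\setminus X)\cong \mathrm{PG}(r(M)-1,q)$, then $M/X$ has no $(q,h+1)$-stack restriction.
   Context: $\mathrm{si}(\cdot)$ denotes simplification and $\mathrm{PG}(k-1,q)$ the rank-$k$ projective geometry over $\mathrm{GF}(q)$. For a prime power $q$ and nonnegative integers $h,t$, a matroid $S$ is a $(q,h,t)$-stack if there are pairwise disjoint subsets $F_1,\dots,F_h$ of $E(S)$ whose union is spanning in $S$, such that for each $i\in\{1,\dots,h\}$ the matroid $(S/(F_1\cup\dots\cup F_{i-1}))|F_i$ has rank at most $t$ and is not $\mathrm{GF}(q)$-representable. A $(q,h)$-stack is a $(q,h,t)$-stack for some $t\ge 0$. A matroid has a stack restriction if some restriction of it is such a stack. *)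

theory Defs
  imports "HOL-Algebra.Ring" "HOL-Computational_Algebra.Primes"
begin

type_synonym 'a matroid = "'a set \<times> ('a set \<Rightarrow> bool)"

definition gr :: "'a matroid \<Rightarrow> 'a set" where "gr M = fst M"
definition ind :: "'a matroid \<Rightarrow> 'a set \<Rightarrow> bool" where "ind M = snd M"

definition matroid :: "'a matroid \<Rightarrow> bool" where
  "matroid M \<longleftrightarrow> finite (gr M)
     \<and> (\<forall>I. ind M I \<longrightarrow> I \<subseteq> gr M)
     \<and> ind M {}
     \<and> (\<forall>I J. ind M J \<and> I \<subseteq> J \<longrightarrow> ind M I)
     \<and> (\<forall>I J. ind M I \<and> ind M J \<and> card I < card J \<longrightarrow>
            (\<exists>e\<in>J - I. ind M (insert e I)))"

definition mrank :: "'a matroid \<Rightarrow> 'a set \<Rightarrow> nat" where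
  "mrank M X = Max {card I | I. I \<subseteq> X \<and> ind M I}"

definition restrict :: "'a matroid \<Rightarrow> 'a set \<Rightarrow> 'a matroid" where
  "restrict M F = (F, \<lambda>I. I \<subseteq> F \<and> ind M I)"

definition delete :: "'a matroid \<Rightarrow> 'a set \<Rightarrow> 'a matroid" where
  "delete M X = restrict M (gr M - X)"

definition contract :: "'a matroid \<Rightarrow> 'a set \<Rightarrow> 'a matroid" where
  "contract M X = (gr M - X,
     \<lambda>I. I \<subseteq> gr M - X \<and> mrank M (I \<union> X) = card I + mrank M X)"

definition matroid_iso :: "'a matroid \<Rightarrow> 'b matroid \<Rightarrow> bool" where
  "matroid_iso M N \<longleftrightarrow> (\<exists>f. bij_betw f (gr M) (gr N) \<and>
      (\<forall>I\<subseteq>gr M. ind M I \<longleftrightarrow> ind N (f ` I)))"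

text \<open>S is the ground set of a simplification of M: no loops, no two distinct
  parallel elements, and every non-loop of M is in S or parallel to an element of S.
  Then si(M) = M|S (unique up to isomorphism).\<close>
definition is_simplification_set :: "'a matroid \<Rightarrow> 'a set \<Rightarrow> bool" where
  "is_simplification_set M S \<longleftrightarrow> S \<subseteq> gr M
     \<and> (\<forall>e\<in>S. ind M {e})
     \<and> (\<forall>e\<in>S. \<forall>f\<in>S. e \<noteq> f \<longrightarrow> ind M {e, f})
     \<and> (\<forall>e\<in>gr M. ind M {e} \<longrightarrow> (\<exists>f\<in>S. e = f \<or> \<not> ind M {e, f}))"

definition vecs :: "('f, 'm) ring_scheme \<Rightarrow> nat \<Rightarrow> (nat \<Rightarrow> 'f) set" where
  "vecs R k = {x. (\<forall>i<k. x i \<in> carrier R) \<and> (\<forall>i\<ge>k. x i = \<zero>\<^bsub>R\<^esub>)}"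

definition zvec :: "('f, 'm) ring_scheme \<Rightarrow> nat \<Rightarrow> 'f" where
  "zvec R = (\<lambda>i. \<zero>\<^bsub>R\<^esub>)"

definition vsmult :: "('f, 'm) ring_scheme \<Rightarrow> nat \<Rightarrow> 'f \<Rightarrow> (nat \<Rightarrow> 'f) \<Rightarrow> (nat \<Rightarrow> 'f)" where
  "vsmult R k c x = (\<lambda>i. if i < k then c \<otimes>\<^bsub>R\<^esub> x i else \<zero>\<^bsub>R\<^esub>)"

text \<open>Linear independence of the family (v e) for e in I (as a family, so repeated
  vectors count as dependent).\<close>
definition lin_indep :: "('f, 'm) ring_scheme \<Rightarrow> nat \<Rightarrow> ('a \<Rightarrow> nat \<Rightarrow> 'f) \<Rightarrow> 'a set \<Rightarrow> bool" where
  "lin_indep R k v I \<longleftrightarrow> (\<forall>c. (\<forall>e\<in>I. c e \<in> carrier R) \<and>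
       (\<forall>i<k. finsum R (\<lambda>e. c e \<otimes>\<^bsub>R\<^esub> v e i) I = \<zero>\<^bsub>R\<^esub>)
       \<longrightarrow> (\<forall>e\<in>I. c e = \<zero>\<^bsub>R\<^esub>))"

text \<open>GF(q)-representability. Any two fields of order q are isomorphic (GF(q)),
  so we quantify over fields of order q, carried by a subset of nat.\<close>
definition representable :: "nat \<Rightarrow> 'a matroid \<Rightarrow> bool" where
  "representable q M \<longleftrightarrow> (\<exists>(R :: nat ring) k v.
      field R \<and> finite (carrier R) \<and> card (carrier R) = q
      \<and> (\<forall>e\<in>gr M. v e \<in> vecs R k)
      \<and> (\<forall>I\<subseteq>gr M. ind M I \<longleftrightarrow> lin_indep R k v I))"

definition vline :: "('f, 'm) ring_scheme \<Rightarrow> nat \<Rightarrow> (nat \<Rightarrow> 'f) \<Rightarrow> (nat \<Rightarrow> 'f) set" where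
  "vline R k x = {vsmult R k c x | c. c \<in> carrier R}"

definition PG_matroid :: "('f, 'm) ring_scheme \<Rightarrow> nat \<Rightarrow> (nat \<Rightarrow> 'f) set matroid" where
  "PG_matroid R k =
    ({vline R k x | x. x \<in> vecs R k \<and> x \<noteq> zvec R},
     \<lambda>S. S \<subseteq> {vline R k x | x. x \<in> vecs R k \<and> x \<noteq> zvec R} \<and>
         (\<forall>w. (\<forall>L\<in>S. w L \<in> L \<and> w L \<noteq> zvec R) \<longrightarrow> lin_indep R k w S))"

text \<open>N is isomorphic to PG(k-1,q), i.e. the rank-k projective geometry over GF(q).\<close>
definition iso_PG :: "'a matroid \<Rightarrow> nat \<Rightarrow> nat \<Rightarrow> bool" where
  "iso_PG N k q \<longleftrightarrow> (\<exists>R :: nat ring. field R \<and> finite (carrier R) \<and>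
      card (carrier R) = q \<and> matroid_iso N (PG_matroid R k))"

text \<open>(q,h,t)-stack, with sets indexed F 0, ..., F (h-1).\<close>
definition is_stack :: "nat \<Rightarrow> nat \<Rightarrow> nat \<Rightarrow> 'a matroid \<Rightarrow> bool" where
  "is_stack q h t S \<longleftrightarrow> (\<exists>F :: nat \<Rightarrow> 'a set.
      (\<forall>i<h. F i \<subseteq> gr S)
      \<and> (\<forall>i<h. \<forall>j<h. i \<noteq> j \<longrightarrow> F i \<inter> F j = {})
      \<and> mrank S (\<Union>i<h. F i) = mrank S (gr S)
      \<and> (\<forall>i<h. let N = restrict (contract S (\<Union>j<i. F j)) (F i) in
             mrank N (gr N) \<le> t \<and> \<not> representable q N))"

definition has_stack_restriction :: "nat \<Rightarrow> nat \<Rightarrow> 'a matroid \<Rightarrow> bool" where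
  "has_stack_restriction q h M \<longleftrightarrow>
     (\<exists>F\<subseteq>gr M. \<exists>t. is_stack q h t (restrict M F))"

definition prime_power :: "nat \<Rightarrow> bool" where
  "prime_power q \<longleftrightarrow> (\<exists>p n. prime p \<and> n \<ge> 1 \<and> q = p ^ n)"

end

theory Submission
  imports Defs
begin

lemma gr_pair[simp]: "gr (A,B) = A" by (simp add: gr_def)
lemma ind_pair[simp]: "ind (A,B) = B" by (simp add: ind_def)

lemma gr_restrict[simp]: "gr (restrict M F) = F" by (simp add: restrict_def)
lemma ind_restrict[simp]: "ind (restrict M F) I = (I \<subseteq> F \<and> ind M I)" by (simp add: restrict_def)
lemma gr_contract[simp]: "gr (contract M X) = gr M - X" by (simp add: contract_def)
lemma ind_contract[simp]: "ind (contract M X) I = (I \<subseteq> gr M - X \<and> mrank M (I \<union> X) = card I + mrank M X)"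
  by (simp add: contract_def)
lemma gr_delete[simp]: "gr (delete M X) = gr M - X" by (simp add: delete_def)
lemma ind_delete[simp]: "ind (delete M X) I = (I \<subseteq> gr M - X \<and> ind M I)" by (simp add: delete_def)

context fixes M :: "'a matroid" assumes mat: "matroid M"
begin

lemma fin: "finite (gr M)" using mat by (simp add: matroid_def)
lemma indsub: "ind M I \<Longrightarrow> I \<subseteq> gr M" using mat by (simp add: matroid_def)
lemma indfin: "ind M I \<Longrightarrow> finite I" using indsub fin finite_subset by blast
lemma indempty: "ind M {}" using mat by (simp add: matroid_def)
lemma inddown: "ind M J \<Longrightarrow> I \<subseteq> J \<Longrightarrow> ind M I"
proof -
  have "\<forall>I J. ind M J \<and> I \<subseteq> J \<longrightarrow> ind M I" using mat by (simp add: matroid_def)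
  thus "ind M J \<Longrightarrow> I \<subseteq> J \<Longrightarrow> ind M I" by blast
qed
lemma indaug: "ind M I \<Longrightarrow> ind M J \<Longrightarrow> card I < card J \<Longrightarrow> \<exists>e\<in>J - I. ind M (insert e I)"
proof -
  have "\<forall>I J. ind M I \<and> ind M J \<and> card I < card J \<longrightarrow> (\<exists>e\<in>J - I. ind M (insert e I))" using mat by (simp add: matroid_def)
  thus "ind M I \<Longrightarrow> ind M J \<Longrightarrow> card I < card J \<Longrightarrow> \<exists>e\<in>J - I. ind M (insert e I)" by blast
qed

lemma rfin: "finite {card I | I. I \<subseteq> Y \<and> ind M I}"
proof -
  have "{card I | I. I \<subseteq> Y \<and> ind M I} \<subseteq> card ` Pow (gr M)"
  proof
    fix x assume "x \<in> {card I | I. I \<subseteq> Y \<and> ind M I}"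
    then obtain I where "x = card I" "ind M I" by blast
    thus "x \<in> card ` Pow (gr M)" using indsub by auto
  qed
  thus ?thesis using fin finite_subset by blast
qed

lemma rank_ge: "ind M I \<Longrightarrow> I \<subseteq> Y \<Longrightarrow> card I \<le> mrank M Y"
  unfolding mrank_def using rfin by (intro Max_ge) auto

lemma rank_obtain: "\<exists>I. I \<subseteq> Y \<and> ind M I \<and> card I = mrank M Y"
proof -
  have "mrank M Y \<in> {card I | I. I \<subseteq> Y \<and> ind M I}"
    unfolding mrank_def using rfin indempty by (intro Max_in) auto
  thus ?thesis by auto
qed

lemma basis_ext: "ind M I \<Longrightarrow> I \<subseteq> Y \<Longrightarrow> \<exists>B. I \<subseteq> B \<and> B \<subseteq> Y \<and> ind M B \<and> card B = mrank M Y"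
proof (induction "mrank M Y - card I" arbitrary: I rule: less_induct)
  case less
  show ?case
  proof (cases "card I = mrank M Y")
    case True then show ?thesis using less by blast
  next
    case False
    with rank_ge[OF less(2,3)] have lt: "card I < mrank M Y" by simp
    obtain J where J: "J \<subseteq> Y" "ind M J" "card J = mrank M Y" using rank_obtain by blast
    then obtain e where e: "e \<in> J - I" "ind M (insert e I)" using indaug[OF less(2) J(2)] lt by auto
    have ci: "card (insert e I) = card I + 1" using e indfin[OF less(2)] by simp
    have "mrank M Y - card (insert e I) < mrank M Y - card I" using ci lt by simp
    from less(1)[OF this e(2)] e J less(3) obtain B where
      "insert e I \<subseteq> B \<and> B \<subseteq> Y \<and> ind M B \<and> card B = mrank M Y" by blast
    thus ?thesis by blast
  qed
qed

lemma rank_mono: "A \<subseteq> B \<Longrightarrow> mrank M A \<le> mrank M B"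
proof -
  assume "A \<subseteq> B"
  obtain I where I: "I \<subseteq> A" "ind M I" "card I = mrank M A" using rank_obtain by blast
  have "card I \<le> mrank M B" using rank_ge[OF I(2)] I(1) \<open>A \<subseteq> B\<close> by (meson order_trans)
  thus ?thesis using I(3) by simp
qed

lemma rank_le_card: "finite A \<Longrightarrow> mrank M A \<le> card A"
proof -
  assume "finite A"
  obtain I where I: "I \<subseteq> A" "ind M I" "card I = mrank M A" using rank_obtain by blast
  have "card I \<le> card A" using card_mono[OF \<open>finite A\<close> I(1)] .
  thus ?thesis using I(3) by simp
qed

lemma ind_rank: "ind M I \<Longrightarrow> mrank M I = card I"
proof -
  assume a: "ind M I"
  have "card I \<le> mrank M I" using rank_ge[OF a] by simp
  moreover have "mrank M I \<le> card I" using rank_le_card[OF indfin[OF a]] .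
  ultimately show ?thesis by simp
qed

lemma rank_ind: "finite I \<Longrightarrow> mrank M I = card I \<Longrightarrow> ind M I"
proof -
  assume a: "finite I" "mrank M I = card I"
  obtain J where J: "J \<subseteq> I" "ind M J" "card J = mrank M I" using rank_obtain by blast
  have "J = I" using card_subset_eq[OF a(1) J(1)] J(3) a(2) by simp
  thus ?thesis using J(2) by simp
qed

lemma submod: "mrank M (A \<union> B) + mrank M (A \<inter> B) \<le> mrank M A + mrank M B"
proof -
  obtain I where I: "I \<subseteq> A \<inter> B" "ind M I" "card I = mrank M (A \<inter> B)" using rank_obtain by blast
  have IAB: "I \<subseteq> A \<union> B" using I(1) by blast
  obtain J where J: "I \<subseteq> J" "J \<subseteq> A \<union> B" "ind M J" "card J = mrank M (A \<union> B)"
    using basis_ext[OF I(2) IAB] by blast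
  have fJ: "finite J" using indfin J(3) by blast
  have a: "card (J \<inter> A) \<le> mrank M A" by (rule rank_ge[OF inddown[OF J(3)]]) auto
  have b: "card (J \<inter> B) \<le> mrank M B" by (rule rank_ge[OF inddown[OF J(3)]]) auto
  have eq: "(J \<inter> A) \<union> (J \<inter> B) = J" using J(2) by blast
  have "card (J \<inter> A) + card (J \<inter> B) = card ((J \<inter> A) \<union> (J \<inter> B)) + card ((J \<inter> A) \<inter> (J \<inter> B))"
    using fJ by (intro card_Un_Int) auto
  hence c: "card (J \<inter> A) + card (J \<inter> B) = card J + card ((J \<inter> A) \<inter> (J \<inter> B))" unfolding eq .
  have sub: "I \<subseteq> (J \<inter> A) \<inter> (J \<inter> B)" using I(1) J(1) by blast
  have d: "card I \<le> card ((J \<inter> A) \<inter> (J \<inter> B))" using card_mono[OF _ sub] fJ by blast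
  show ?thesis using a b c d I(3) J(4) by linarith
qed

lemma subadd: "finite I \<Longrightarrow> mrank M (A \<union> I) \<le> mrank M A + card I"
  using submod[of A I] rank_le_card[of I] by linarith

lemma cl_lemma:
  assumes "finite B" "\<forall>e\<in>B. \<exists>f\<in>A. mrank M {f,e} = mrank M {f}"
  shows "mrank M (A \<union> B) = mrank M A"
  using assms
proof (induction B rule: finite_induct)
  case empty then show ?case by simp
next
  case (insert e B)
  then obtain f where f: "f \<in> A" "mrank M {f,e} = mrank M {f}" by blast
  have IH: "mrank M (A \<union> B) = mrank M A" using insert by blast
  have eq: "(A \<union> B) \<union> {f,e} = A \<union> insert e B" using f by auto
  have "mrank M ((A \<union> B) \<union> {f,e}) + mrank M ((A \<union> B) \<inter> {f,e}) \<le> mrank M (A \<union> B) + mrank M {f,e}"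
    by (rule submod)
  hence "mrank M (A \<union> insert e B) + mrank M ((A \<union> B) \<inter> {f,e}) \<le> mrank M (A \<union> B) + mrank M {f,e}"
    unfolding eq .
  moreover have "mrank M {f} \<le> mrank M ((A \<union> B) \<inter> {f,e})" using f by (intro rank_mono) auto
  moreover have "mrank M (A \<union> B) \<le> mrank M (A \<union> insert e B)" by (intro rank_mono) auto
  ultimately show ?case using IH f by linarith
qed

lemma basis_span: "B \<subseteq> U \<Longrightarrow> ind M B \<Longrightarrow> card B = mrank M U \<Longrightarrow> mrank M (Z \<union> U) = mrank M (Z \<union> B)"
proof -
  assume a: "B \<subseteq> U" "ind M B" "card B = mrank M U"
  have eq: "(Z \<union> B) \<union> U = Z \<union> U" using a by auto
  have "mrank M ((Z \<union> B) \<union> U) + mrank M ((Z \<union> B) \<inter> U) \<le> mrank M (Z \<union> B) + mrank M U" by (rule submod)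
  hence "mrank M (Z \<union> U) + mrank M ((Z \<union> B) \<inter> U) \<le> mrank M (Z \<union> B) + mrank M U" unfolding eq .
  moreover have "mrank M B \<le> mrank M ((Z \<union> B) \<inter> U)" using a by (intro rank_mono) auto
  moreover have "mrank M (Z \<union> B) \<le> mrank M (Z \<union> U)" using a by (intro rank_mono) auto
  moreover have "mrank M B = card B" using ind_rank a(2) by blast
  ultimately show ?thesis using a(3) by linarith
qed

end


context fixes M :: "'a matroid" assumes mat: "matroid M"
begin

lemma contr_rank:
  assumes Y: "Y \<subseteq> gr M - X"
  shows "Max {card I | I. I \<subseteq> Y \<and> mrank M (I \<union> X) = card I + mrank M X} = mrank M (Y \<union> X) - mrank M X"
proof -
  let ?K = "{card I | I. I \<subseteq> Y \<and> mrank M (I \<union> X) = card I + mrank M X}"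
  have fY: "finite Y" using Y fin[OF mat] finite_subset by blast
  have fK: "finite ?K"
  proof -
    have "?K \<subseteq> card ` Pow Y" by blast
    thus ?thesis using fY finite_subset by blast
  qed
  obtain BX where BX: "BX \<subseteq> X" "ind M BX" "card BX = mrank M X" using rank_obtain[OF mat] by blast
  have BXs: "BX \<subseteq> Y \<union> X" using BX(1) by blast
  obtain B where B: "BX \<subseteq> B" "B \<subseteq> Y \<union> X" "ind M B" "card B = mrank M (Y \<union> X)"
    using basis_ext[OF mat BX(2) BXs] by blast
  define I where "I = B - X"
  have fB: "finite B" using indfin[OF mat B(3)] .
  have IY: "I \<subseteq> Y" using B(2) I_def by blast
  have Bsplit: "B = I \<union> (B \<inter> X)" using I_def by blast
  have "card (I \<union> (B \<inter> X)) = card I + card (B \<inter> X)"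
    by (rule card_Un_disjoint) (use fB I_def in auto)
  hence c1: "card B = card I + card (B \<inter> X)" using Bsplit by simp
  have c2: "card BX \<le> card (B \<inter> X)" using card_mono[of "B \<inter> X" BX] fB BX(1) B(1) by blast
  have c3: "card B \<le> mrank M (I \<union> X)"
  proof -
    have "B \<subseteq> I \<union> X" using I_def by blast
    from rank_mono[OF mat this] ind_rank[OF mat B(3)] show ?thesis by simp
  qed
  have c4: "mrank M (I \<union> X) \<le> mrank M X + card I"
    using subadd[OF mat, of I X] fB I_def by (simp add: sup_commute)
  have eqI: "mrank M (I \<union> X) = card I + mrank M X" using c1 c2 c3 c4 BX(3) by linarith
  have cI: "card I = mrank M (Y \<union> X) - mrank M X" using c1 c2 c3 c4 BX(3) B(4) by linarith
  show ?thesis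
  proof (rule Max_eqI[OF fK])
    fix y assume "y \<in> ?K"
    then obtain J where J: "y = card J" "J \<subseteq> Y" "mrank M (J \<union> X) = card J + mrank M X" by blast
    have "J \<union> X \<subseteq> Y \<union> X" using J(2) by blast
    from rank_mono[OF mat this] J(3) J(1) show "y \<le> mrank M (Y \<union> X) - mrank M X" by linarith
  next
    show "mrank M (Y \<union> X) - mrank M X \<in> ?K" using IY eqI cI by (metis (mono_tags, lifting) mem_Collect_eq)
  qed
qed

lemma rankS:
  assumes "F0 \<subseteq> gr M - X" "Y \<subseteq> F0"
  shows "mrank (restrict (contract M X) F0) Y = mrank M (Y \<union> X) - mrank M X"
proof -
  have e: "\<And>I. (I \<subseteq> Y \<and> ind (restrict (contract M X) F0) I) = (I \<subseteq> Y \<and> mrank M (I \<union> X) = card I + mrank M X)"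
  proof -
    fix I
    show "(I \<subseteq> Y \<and> ind (restrict (contract M X) F0) I) = (I \<subseteq> Y \<and> mrank M (I \<union> X) = card I + mrank M X)"
    proof (cases "I \<subseteq> Y")
      case True
      hence "I \<subseteq> F0" "I \<subseteq> gr M - X" using assms by auto
      thus ?thesis using True by simp
    qed simp
  qed
  show ?thesis unfolding mrank_def[of "restrict (contract M X) F0"] e
    using contr_rank[of Y X] assms unfolding mrank_def by blast
qed

lemma rank1: "ind M {e} \<Longrightarrow> mrank M {e} = 1"
  using ind_rank[OF mat, of "{e}"] by simp

lemma par:
  assumes "ind M {s}" "ind M {e}" "e = s \<or> \<not> ind M {e,s}"
  shows "mrank M {s,e} = mrank M {s}" "mrank M {e,s} = mrank M {e}"
proof -
  have r: "mrank M {e,s} = 1"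
  proof (cases "e = s")
    case True then show ?thesis using rank1 assms by simp
  next
    case False
    hence nd: "\<not> ind M {e,s}" using assms by blast
    have c: "card {e,s} = 2" using False by simp
    have "mrank M {e,s} \<le> 2" using rank_le_card[OF mat, of "{e,s}"] c by simp
    moreover have "mrank M {e,s} \<noteq> 2" using rank_ind[OF mat, of "{e,s}"] c nd by auto
    moreover have "mrank M {e} \<le> mrank M {e,s}" by (rule rank_mono[OF mat]) auto
    ultimately show ?thesis using rank1 assms by simp
  qed
  show "mrank M {s,e} = mrank M {s}" using r rank1[OF assms(1)] by (simp add: insert_commute)
  show "mrank M {e,s} = mrank M {e}" using r rank1[OF assms(2)] by simp
qed

lemma simp_ind:
  assumes J: "J \<subseteq> gr M"
    and sig: "\<And>e. e \<in> J \<Longrightarrow> ind M {e} \<Longrightarrow> ind M {\<sigma> e} \<and> (e = \<sigma> e \<or> \<not> ind M {e, \<sigma> e})"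
  shows "ind M J \<longleftrightarrow> (\<forall>e\<in>J. ind M {e}) \<and> inj_on \<sigma> J \<and> ind M (\<sigma> ` J)"
proof
  have fJ: "finite J" using J fin[OF mat] finite_subset by blast
  assume iJ: "ind M J"
  have loops: "\<forall>e\<in>J. ind M {e}" using inddown[OF mat iJ] by simp
  have inj: "inj_on \<sigma> J"
  proof (rule inj_onI, rule ccontr)
    fix e1 e2 assume a: "e1 \<in> J" "e2 \<in> J" "\<sigma> e1 = \<sigma> e2" "e1 \<noteq> e2"
    have i12: "ind M {e1,e2}" using inddown[OF mat iJ, of "{e1,e2}"] a by simp
    have "\<forall>e\<in>{e1,e2}. \<exists>f\<in>{\<sigma> e1}. mrank M {f,e} = mrank M {f}"
    proof
      fix e assume e: "e \<in> {e1,e2}"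
      hence eJ: "e \<in> J" and se: "\<sigma> e = \<sigma> e1" using a by auto
      have le: "ind M {e}" using loops eJ by blast
      have "mrank M {\<sigma> e, e} = mrank M {\<sigma> e}" using par(1)[of "\<sigma> e" e] sig[OF eJ le] le by blast
      thus "\<exists>f\<in>{\<sigma> e1}. mrank M {f,e} = mrank M {f}" using se by auto
    qed
    from cl_lemma[OF mat _ this] have "mrank M ({\<sigma> e1} \<union> {e1,e2}) = mrank M {\<sigma> e1}" by simp
    moreover have "mrank M {e1,e2} \<le> mrank M ({\<sigma> e1} \<union> {e1,e2})" by (rule rank_mono[OF mat]) auto
    moreover have "mrank M {\<sigma> e1} = 1" using rank1 sig[OF a(1)] loops a(1) by blast
    moreover have "mrank M {e1,e2} = 2" using ind_rank[OF mat i12] a by simp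
    ultimately show False by linarith
  qed
  have "\<forall>e\<in>J. \<exists>f\<in>\<sigma> ` J. mrank M {f,e} = mrank M {f}"
  proof
    fix e assume eJ: "e \<in> J"
    have le: "ind M {e}" using loops eJ by blast
    have "mrank M {\<sigma> e, e} = mrank M {\<sigma> e}" using par(1)[of "\<sigma> e" e] sig[OF eJ le] le by blast
    thus "\<exists>f\<in>\<sigma> ` J. mrank M {f,e} = mrank M {f}" using eJ by blast
  qed
  from cl_lemma[OF mat fJ this] have "mrank M (\<sigma> ` J \<union> J) = mrank M (\<sigma> ` J)" .
  moreover have "mrank M J \<le> mrank M (\<sigma> ` J \<union> J)" by (rule rank_mono[OF mat]) auto
  moreover have "mrank M J = card (\<sigma> ` J)" using ind_rank[OF mat iJ] card_image[OF inj] by simp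
  moreover have "mrank M (\<sigma> ` J) \<le> card (\<sigma> ` J)" using rank_le_card[OF mat finite_imageI[OF fJ]] .
  ultimately have "mrank M (\<sigma> ` J) = card (\<sigma> ` J)" by linarith
  hence "ind M (\<sigma> ` J)" using rank_ind[OF mat finite_imageI[OF fJ]] by blast
  thus "(\<forall>e\<in>J. ind M {e}) \<and> inj_on \<sigma> J \<and> ind M (\<sigma> ` J)" using loops inj by blast
next
  have fJ: "finite J" using J fin[OF mat] finite_subset by blast
  assume a: "(\<forall>e\<in>J. ind M {e}) \<and> inj_on \<sigma> J \<and> ind M (\<sigma> ` J)"
  have "\<forall>s\<in>\<sigma> ` J. \<exists>f\<in>J. mrank M {f,s} = mrank M {f}"
  proof
    fix s assume "s \<in> \<sigma> ` J"
    then obtain e where eJ: "e \<in> J" and se: "s = \<sigma> e" by blast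
    have le: "ind M {e}" using a eJ by blast
    have "mrank M {e, \<sigma> e} = mrank M {e}" using par(2)[of "\<sigma> e" e] sig[OF eJ le] le by blast
    thus "\<exists>f\<in>J. mrank M {f,s} = mrank M {f}" using eJ se by blast
  qed
  from cl_lemma[OF mat _ this] fJ have "mrank M (J \<union> \<sigma> ` J) = mrank M J" by simp
  moreover have "mrank M (\<sigma> ` J) \<le> mrank M (J \<union> \<sigma> ` J)" by (rule rank_mono[OF mat]) auto
  moreover have "mrank M (\<sigma> ` J) = card J" using ind_rank[OF mat, of "\<sigma> ` J"] a card_image[of \<sigma> J] by simp
  moreover have "mrank M J \<le> card J" using rank_le_card[OF mat fJ] .
  ultimately have "mrank M J = card J" by linarith
  thus "ind M J" using rank_ind[OF mat fJ] by blast
qed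

end


definition proj :: "('f, 'm) ring_scheme \<Rightarrow> nat \<Rightarrow> (nat \<Rightarrow> 'f) \<Rightarrow> (nat \<Rightarrow> 'f) \<Rightarrow> (nat \<Rightarrow> 'f)" where
  "proj R j u x = (\<lambda>i. x i \<ominus>\<^bsub>R\<^esub> (x j \<otimes>\<^bsub>R\<^esub> inv\<^bsub>R\<^esub> (u j)) \<otimes>\<^bsub>R\<^esub> u i)"

lemma (in cring) alg1:
  assumes "a \<in> carrier R" "b \<in> carrier R" "d \<in> carrier R" "y \<in> carrier R" "z \<in> carrier R"
    "s2 \<in> carrier R" "s3 \<in> carrier R"
  shows "a \<otimes> (b \<ominus> (d \<otimes> y) \<otimes> z) \<oplus> (s2 \<ominus> s3 \<otimes> (y \<otimes> z)) = (a \<otimes> b \<oplus> s2) \<ominus> (a \<otimes> d \<oplus> s3) \<otimes> (y \<otimes> z)"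
  using assms by algebra

context field begin

lemma vecs_carrier: "x \<in> vecs R k \<Longrightarrow> i < k \<Longrightarrow> x i \<in> carrier R"
  by (simp add: vecs_def)
lemma vecs_zero: "x \<in> vecs R k \<Longrightarrow> k \<le> i \<Longrightarrow> x i = \<zero>"
  by (simp add: vecs_def)

lemma unit_of: "a \<in> carrier R \<Longrightarrow> a \<noteq> \<zero> \<Longrightarrow> a \<in> Units R"
  using field_Units by blast

lemma proj_vecs:
  assumes "x \<in> vecs R k" "u \<in> vecs R k" "j < k" "u j \<in> Units R"
  shows "proj R j u x \<in> vecs R k"
proof -
  have ij: "inv (u j) \<in> carrier R" using assms(4) by simp
  have xj: "x j \<in> carrier R" using assms vecs_carrier by blast
  show ?thesis unfolding vecs_def proj_def
  proof (intro CollectI conjI allI impI)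
    fix i assume "i < k"
    thus "x i \<ominus> x j \<otimes> inv u j \<otimes> u i \<in> carrier R" using assms ij xj vecs_carrier by simp
  next
    fix i assume "k \<le> i"
    hence "x i = \<zero>" "u i = \<zero>" using vecs_zero[OF assms(1)] vecs_zero[OF assms(2)] by auto
    thus "x i \<ominus> x j \<otimes> inv u j \<otimes> u i = \<zero>" using ij xj by (simp add: minus_eq)
  qed
qed

lemma KI:
  assumes "finite I" "\<forall>e\<in>I. c e \<in> carrier R" "\<forall>e\<in>I. v e \<in> vecs R k" "u \<in> vecs R k"
    "j < k" "i < k" "u j \<in> Units R"
  shows "finsum R (\<lambda>e. c e \<otimes> proj R j u (v e) i) I
       = finsum R (\<lambda>e. c e \<otimes> v e i) I \<ominus> finsum R (\<lambda>e. c e \<otimes> v e j) I \<otimes> (inv (u j) \<otimes> u i)"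
  using assms(1,2,3)
proof (induction I rule: finite_induct)
  case empty
  have "inv (u j) \<in> carrier R" "u i \<in> carrier R" using assms vecs_carrier by auto
  then show ?case by (simp add: minus_eq)
next
  case (insert a I)
  have iu: "inv (u j) \<in> carrier R" "u i \<in> carrier R" "u j \<in> carrier R" using assms vecs_carrier by auto
  have ca: "c a \<in> carrier R" "v a i \<in> carrier R" "v a j \<in> carrier R" using insert assms vecs_carrier by auto
  have f1: "(\<lambda>e. c e \<otimes> proj R j u (v e) i) \<in> I \<rightarrow> carrier R"
    using insert assms iu vecs_carrier by (auto simp: proj_def)
  have f2: "(\<lambda>e. c e \<otimes> v e i) \<in> I \<rightarrow> carrier R" using insert assms vecs_carrier by auto
  have f3: "(\<lambda>e. c e \<otimes> v e j) \<in> I \<rightarrow> carrier R" using insert assms vecs_carrier by auto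
  have s2: "finsum R (\<lambda>e. c e \<otimes> v e i) I \<in> carrier R" using f2 by simp
  have s3: "finsum R (\<lambda>e. c e \<otimes> v e j) I \<in> carrier R" using f3 by simp
  have IH: "finsum R (\<lambda>e. c e \<otimes> proj R j u (v e) i) I
       = finsum R (\<lambda>e. c e \<otimes> v e i) I \<ominus> finsum R (\<lambda>e. c e \<otimes> v e j) I \<otimes> (inv (u j) \<otimes> u i)"
    using insert by simp
  have pa: "proj R j u (v a) i = v a i \<ominus> (v a j \<otimes> inv (u j)) \<otimes> u i" by (simp add: proj_def)
  have "finsum R (\<lambda>e. c e \<otimes> proj R j u (v e) (i)) (insert a I)
      = c a \<otimes> proj R j u (v a) i \<oplus> finsum R (\<lambda>e. c e \<otimes> proj R j u (v e) i) I"
    using insert f1 ca iu by (intro finsum_insert) (auto simp: proj_def)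
  also have "\<dots> = c a \<otimes> (v a i \<ominus> (v a j \<otimes> inv (u j)) \<otimes> u i) \<oplus>
      (finsum R (\<lambda>e. c e \<otimes> v e i) I \<ominus> finsum R (\<lambda>e. c e \<otimes> v e j) I \<otimes> (inv (u j) \<otimes> u i))"
    using IH pa by simp
  also have "\<dots> = (c a \<otimes> v a i \<oplus> finsum R (\<lambda>e. c e \<otimes> v e i) I) \<ominus>
       (c a \<otimes> v a j \<oplus> finsum R (\<lambda>e. c e \<otimes> v e j) I) \<otimes> (inv (u j) \<otimes> u i)"
    using alg1[OF ca(1) ca(2) ca(3) iu(1) iu(2) s2 s3] .
  also have "\<dots> = finsum R (\<lambda>e. c e \<otimes> v e i) (insert a I) \<ominus> finsum R (\<lambda>e. c e \<otimes> v e j) (insert a I) \<otimes> (inv (u j) \<otimes> u i)"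
    using insert f2 f3 ca by (subst finsum_insert, auto)+
  finally show ?case .
qed

end


lemma (in cring) alg3:
  assumes "cb \<in> carrier R" "ui \<in> carrier R" "uj \<in> carrier R" "iv \<in> carrier R"
  shows "\<ominus>(cb \<otimes> ui) \<ominus> (\<ominus>(cb \<otimes> uj)) \<otimes> (iv \<otimes> ui) = cb \<otimes> ui \<otimes> (uj \<otimes> iv) \<ominus> cb \<otimes> ui"
  using assms by algebra

lemma (in cring) alg4:
  assumes "sj \<in> carrier R" "si \<in> carrier R" "ui \<in> carrier R" "iv \<in> carrier R"
  shows "\<ominus> (sj \<otimes> iv) \<otimes> ui \<oplus> si = si \<ominus> sj \<otimes> (iv \<otimes> ui)"
  using assms by algebra

context field begin

lemma fs_closed: "finite I \<Longrightarrow> \<forall>e\<in>I. c e \<in> carrier R \<Longrightarrow> \<forall>e\<in>I. v e \<in> vecs R k \<Longrightarrow> i < k \<Longrightarrow>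
   finsum R (\<lambda>e. c e \<otimes> v e i) I \<in> carrier R"
  by (intro finsum_closed) (auto simp: vecs_def)

lemma SS:
  assumes fI: "finite I" and bI: "b \<notin> I" and vv: "\<forall>e\<in>insert b I. v e \<in> vecs R k"
    and jk: "j < k" and nz: "v b j \<noteq> \<zero>"
  shows "lin_indep R k (\<lambda>e. proj R j (v b) (v e)) I \<longleftrightarrow> lin_indep R k v (insert b I)"
proof -
  define u where "u = v b"
  have u: "u \<in> vecs R k" using vv u_def by simp
  have uj: "u j \<in> carrier R" using u jk vecs_carrier by blast
  have U: "u j \<in> Units R" using unit_of uj nz u_def by simp
  have iv: "inv (u j) \<in> carrier R" using U by simp
  have uinv: "u j \<otimes> inv (u j) = \<one>" using U by simp
  have vI: "\<forall>e\<in>I. v e \<in> vecs R k" using vv by simp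
  show ?thesis unfolding u_def[symmetric]
  proof
    assume LW: "lin_indep R k (\<lambda>e. proj R j u (v e)) I"
    show "lin_indep R k v (insert b I)" unfolding lin_indep_def
    proof (intro allI impI)
      fix c assume a: "(\<forall>e\<in>insert b I. c e \<in> carrier R) \<and>
          (\<forall>i<k. finsum R (\<lambda>e. c e \<otimes> v e i) (insert b I) = \<zero>)"
      have cb: "c b \<in> carrier R" using a by simp
      have cI: "\<forall>e\<in>I. c e \<in> carrier R" using a by simp
      have Si: "finsum R (\<lambda>e. c e \<otimes> v e i) I = \<ominus> (c b \<otimes> u i)" if ik: "i < k" for i
      proof -
        have ui: "u i \<in> carrier R" using u ik vecs_carrier by blast
        have sc: "finsum R (\<lambda>e. c e \<otimes> v e i) I \<in> carrier R" using fs_closed[OF fI cI vI ik] .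
        have "finsum R (\<lambda>e. c e \<otimes> v e i) (insert b I) = c b \<otimes> v b i \<oplus> finsum R (\<lambda>e. c e \<otimes> v e i) I"
          using fI bI cI vI cb vv ik by (intro finsum_insert) (auto simp: vecs_def)
        hence "c b \<otimes> u i \<oplus> finsum R (\<lambda>e. c e \<otimes> v e i) I = \<zero>" using a ik u_def by simp
        hence "finsum R (\<lambda>e. c e \<otimes> v e i) I \<oplus> c b \<otimes> u i = \<zero>" using sc cb ui a_comm by simp
        thus ?thesis using minus_equality sc cb ui by (metis m_closed)
      qed
      have Wz: "\<forall>i<k. finsum R (\<lambda>e. c e \<otimes> proj R j u (v e) i) I = \<zero>"
      proof (intro allI impI)
        fix i assume ik: "i < k"
        have ui: "u i \<in> carrier R" using u ik vecs_carrier by blast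
        have "finsum R (\<lambda>e. c e \<otimes> proj R j u (v e) i) I
           = finsum R (\<lambda>e. c e \<otimes> v e i) I \<ominus> finsum R (\<lambda>e. c e \<otimes> v e j) I \<otimes> (inv (u j) \<otimes> u i)"
          using KI[OF fI cI vI u jk ik U] .
        also have "\<dots> = \<ominus>(c b \<otimes> u i) \<ominus> (\<ominus>(c b \<otimes> u j)) \<otimes> (inv (u j) \<otimes> u i)"
          using Si ik jk by simp
        also have "\<dots> = c b \<otimes> u i \<otimes> (u j \<otimes> inv (u j)) \<ominus> c b \<otimes> u i"
          using alg3[OF cb ui uj iv] .
        also have "\<dots> = \<zero>" using uinv cb ui by (simp add: minus_eq r_neg)
        finally show "finsum R (\<lambda>e. c e \<otimes> proj R j u (v e) i) I = \<zero>" .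
      qed
      have c0: "\<forall>e\<in>I. c e = \<zero>" using LW cI Wz unfolding lin_indep_def by blast
      have "finsum R (\<lambda>e. c e \<otimes> v e j) I = \<zero>"
        using c0 vI jk by (intro add.finprod_one_eqI) (auto simp: vecs_def)
      hence "\<ominus>(c b \<otimes> u j) = \<zero>" using Si jk by simp
      hence "c b \<otimes> u j = \<zero>" using cb uj by (metis minus_minus minus_zero m_closed)
      hence "c b = \<zero>" using integral cb uj nz u_def by blast
      thus "\<forall>e\<in>insert b I. c e = \<zero>" using c0 by simp
    qed
  next
    assume LV: "lin_indep R k v (insert b I)"
    show "lin_indep R k (\<lambda>e. proj R j u (v e)) I" unfolding lin_indep_def
    proof (intro allI impI)
      fix c assume a: "(\<forall>e\<in>I. c e \<in> carrier R) \<and>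
          (\<forall>i<k. finsum R (\<lambda>e. c e \<otimes> proj R j u (v e) i) I = \<zero>)"
      have cI: "\<forall>e\<in>I. c e \<in> carrier R" using a by simp
      define sj where "sj = finsum R (\<lambda>e. c e \<otimes> v e j) I"
      have sjc: "sj \<in> carrier R" using fs_closed[OF fI cI vI jk] sj_def by simp
      define cb where "cb = \<ominus> (sj \<otimes> inv (u j))"
      have cbc: "cb \<in> carrier R" using sjc iv cb_def by simp
      define c' where "c' = c(b := cb)"
      have c'c: "\<forall>e\<in>insert b I. c' e \<in> carrier R" using cI cbc c'_def by simp
      have c'I: "\<forall>e\<in>I. c' e = c e" using bI c'_def by auto
      have sums: "\<forall>i<k. finsum R (\<lambda>e. c' e \<otimes> v e i) (insert b I) = \<zero>"
      proof (intro allI impI)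
        fix i assume ik: "i < k"
        have ui: "u i \<in> carrier R" using u ik vecs_carrier by blast
        have si: "finsum R (\<lambda>e. c e \<otimes> v e i) I \<in> carrier R" using fs_closed[OF fI cI vI ik] .
        have "finsum R (\<lambda>e. c' e \<otimes> v e i) (insert b I) = c' b \<otimes> v b i \<oplus> finsum R (\<lambda>e. c' e \<otimes> v e i) I"
          using fI bI c'c vI vv ik by (intro finsum_insert) (auto simp: vecs_def)
        also have "finsum R (\<lambda>e. c' e \<otimes> v e i) I = finsum R (\<lambda>e. c e \<otimes> v e i) I"
          using c'I cI vI ik by (intro add.finprod_cong') (auto simp: vecs_def)
        also have "c' b \<otimes> v b i = \<ominus> (sj \<otimes> inv (u j)) \<otimes> u i" using c'_def cb_def u_def by simp
        also have "\<ominus> (sj \<otimes> inv (u j)) \<otimes> u i \<oplus> finsum R (\<lambda>e. c e \<otimes> v e i) I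
            = finsum R (\<lambda>e. c e \<otimes> v e i) I \<ominus> sj \<otimes> (inv (u j) \<otimes> u i)"
          using alg4[OF sjc si ui iv] .
        also have "\<dots> = finsum R (\<lambda>e. c e \<otimes> proj R j u (v e) i) I"
          using KI[OF fI cI vI u jk ik U] sj_def by simp
        also have "\<dots> = \<zero>" using a ik by simp
        finally show "finsum R (\<lambda>e. c' e \<otimes> v e i) (insert b I) = \<zero>" .
      qed
      have "\<forall>e\<in>insert b I. c' e = \<zero>" using LV c'c sums unfolding lin_indep_def by blast
      thus "\<forall>e\<in>I. c e = \<zero>" using c'I by simp
    qed
  qed
qed

end


context field begin

lemma li_mono:
  assumes fJ: "finite J" and IJ: "I \<subseteq> J" and vJ: "\<forall>e\<in>J. v e \<in> vecs R k" and L: "lin_indep R k v J"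
  shows "lin_indep R k v I"
  unfolding lin_indep_def
proof (intro allI impI)
  fix c assume a: "(\<forall>e\<in>I. c e \<in> carrier R) \<and> (\<forall>i<k. finsum R (\<lambda>e. c e \<otimes> v e i) I = \<zero>)"
  define c' where "c' = (\<lambda>e. if e \<in> I then c e else \<zero>)"
  have c'c: "\<forall>e\<in>J. c' e \<in> carrier R" using a c'_def by auto
  have "\<forall>i<k. finsum R (\<lambda>e. c' e \<otimes> v e i) J = \<zero>"
  proof (intro allI impI)
    fix i assume ik: "i < k"
    have "finsum R (\<lambda>e. c e \<otimes> v e i) I = finsum R (\<lambda>e. c' e \<otimes> v e i) J"
      by (rule add.finprod_mono_neutral_cong_left[OF fJ IJ])
         (use vJ ik c'c IJ a in \<open>auto simp: c'_def vecs_def\<close>)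
    thus "finsum R (\<lambda>e. c' e \<otimes> v e i) J = \<zero>" using a ik by simp
  qed
  hence z: "\<forall>e\<in>J. c' e = \<zero>" using spec[OF L[unfolded lin_indep_def], of c'] c'c by blast
  show "\<forall>e\<in>I. c e = \<zero>"
  proof
    fix e assume eI: "e \<in> I"
    hence "c' e = \<zero>" using z IJ by blast
    thus "c e = \<zero>" using eI c'_def by simp
  qed
qed

lemma li_single_nz:
  assumes "v b \<in> vecs R k" "lin_indep R k v {b}"
  shows "\<exists>j<k. v b j \<noteq> \<zero>"
proof (rule ccontr)
  assume "\<not> (\<exists>j<k. v b j \<noteq> \<zero>)"
  hence z: "\<forall>j<k. v b j = \<zero>" by simp
  have sums: "\<forall>i<k. finsum R (\<lambda>e. (\<lambda>_. \<one>) e \<otimes> v e i) {b} = \<zero>" using z by simp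
  have "\<forall>e\<in>{b}. (\<lambda>_. \<one>) e = \<zero>"
    using spec[OF assms(2)[unfolded lin_indep_def], of "\<lambda>_. \<one>"] sums by simp
  thus False by simp
qed

lemma contract_vec:
  assumes "finite B"
  shows "\<And>D. finite D \<Longrightarrow> B \<inter> D = {} \<Longrightarrow> \<forall>e\<in>B \<union> D. v e \<in> vecs R k \<Longrightarrow> lin_indep R k v B \<Longrightarrow>
    \<exists>w. (\<forall>e\<in>D. w e \<in> vecs R k) \<and> (\<forall>I\<subseteq>D. lin_indep R k w I \<longleftrightarrow> lin_indep R k v (I \<union> B))"
  using assms
proof (induction B rule: finite_induct)
  case empty
  then show ?case by (intro exI[of _ v]) auto
next
  case (insert b B)
  have fD': "finite (insert b D)" using insert by simp
  have dis: "B \<inter> insert b D = {}" using insert by auto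
  have vv: "\<forall>e\<in>B \<union> insert b D. v e \<in> vecs R k" using insert by auto
  have liB: "lin_indep R k v B"
    by (rule li_mono[OF _ _ _ insert.prems(4)]) (use insert in auto)
  obtain w' where w': "\<forall>e\<in>insert b D. w' e \<in> vecs R k"
     "\<forall>I\<subseteq>insert b D. lin_indep R k w' I \<longleftrightarrow> lin_indep R k v (I \<union> B)"
    using insert.IH[OF fD' dis vv liB] by blast
  have wb: "w' b \<in> vecs R k" using w'(1) by simp
  have bsub: "{b} \<subseteq> insert b D" by simp
  have "lin_indep R k w' {b} \<longleftrightarrow> lin_indep R k v ({b} \<union> B)" using w'(2) bsub by blast
  hence "lin_indep R k w' {b}" using insert.prems(4) by simp
  then obtain j where j: "j < k" "w' b j \<noteq> \<zero>" using li_single_nz[of w' b k] wb by blast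
  have "w' b j \<in> carrier R" using vecs_carrier[OF wb j(1)] .
  hence U: "w' b j \<in> Units R" using unit_of j(2) by blast
  define w where "w = (\<lambda>e. proj R j (w' b) (w' e))"
  have wv: "\<forall>e\<in>D. w e \<in> vecs R k"
  proof
    fix e assume "e \<in> D"
    hence "w' e \<in> vecs R k" using w'(1) by simp
    thus "w e \<in> vecs R k" unfolding w_def using proj_vecs[OF _ wb j(1) U] by blast
  qed
  have "\<forall>I\<subseteq>D. lin_indep R k w I \<longleftrightarrow> lin_indep R k v (I \<union> insert b B)"
  proof (intro allI impI)
    fix I assume ID: "I \<subseteq> D"
    have fI: "finite I" using ID insert.prems(1) finite_subset by blast
    have bI: "b \<notin> I" using ID insert.prems(2) by auto
    have "lin_indep R k w I \<longleftrightarrow> lin_indep R k w' (insert b I)"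
      unfolding w_def by (rule SS[of I b w' k j, OF fI bI _ j]) (use w'(1) ID in auto)
    also have "\<dots> \<longleftrightarrow> lin_indep R k v (insert b I \<union> B)"
    proof -
      have "insert b I \<subseteq> insert b D" using ID by blast
      thus ?thesis using w'(2) by blast
    qed
    finally show "lin_indep R k w I \<longleftrightarrow> lin_indep R k v (I \<union> insert b B)" by simp
  qed
  thus ?case using wv by blast
qed

lemma li_zero:
  assumes "finite I" "e \<in> I" "\<forall>i<k. v e i = \<zero>" "\<forall>x\<in>I. v x \<in> vecs R k"
  shows "\<not> lin_indep R k v I"
proof
  assume L: "lin_indep R k v I"
  define c where "c = (\<lambda>x. if x = e then \<one> else \<zero>)"
  have cc: "\<forall>x\<in>I. c x \<in> carrier R" using c_def by simp
  have sums: "\<forall>i<k. finsum R (\<lambda>x. c x \<otimes> v x i) I = \<zero>"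
    using assms by (intro allI impI add.finprod_one_eqI) (auto simp: c_def vecs_def)
  have "\<forall>x\<in>I. c x = \<zero>" using spec[OF L[unfolded lin_indep_def], of c] cc sums by blast
  hence "c e = \<zero>" using assms(2) by blast
  thus False using c_def by simp
qed

lemma li_dup:
  assumes fI: "finite I" and e: "e1 \<in> I" "e2 \<in> I" "e1 \<noteq> e2" "v e1 = v e2" and vv: "\<forall>x\<in>I. v x \<in> vecs R k"
  shows "\<not> lin_indep R k v I"
proof
  assume L: "lin_indep R k v I"
  define c where "c = (\<lambda>x. if x = e1 then \<one> else if x = e2 then \<ominus> \<one> else \<zero>)"
  have cc: "\<forall>x\<in>I. c x \<in> carrier R" using c_def by simp
  have sums: "\<forall>i<k. finsum R (\<lambda>x. c x \<otimes> v x i) I = \<zero>"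
  proof (intro allI impI)
    fix i assume ik: "i < k"
    define J where "J = I - {e1, e2}"
    have fJ: "finite J" using fI J_def by simp
    have Ieq: "I = insert e1 (insert e2 J)" using e J_def by auto
    have vi: "v e1 i \<in> carrier R" using vv e ik vecs_carrier by blast
    have z: "finsum R (\<lambda>x. c x \<otimes> v x i) J = \<zero>"
      using vv ik J_def by (intro add.finprod_one_eqI) (auto simp: c_def vecs_def)
    have f: "(\<lambda>x. c x \<otimes> v x i) \<in> J \<rightarrow> carrier R" using vv ik J_def cc by (auto simp: vecs_def)
    have "finsum R (\<lambda>x. c x \<otimes> v x i) (insert e1 (insert e2 J))
        = c e1 \<otimes> v e1 i \<oplus> (c e2 \<otimes> v e2 i \<oplus> finsum R (\<lambda>x. c x \<otimes> v x i) J)"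
      using fJ f e J_def vi cc by (simp add: finsum_insert c_def)
    also have "\<dots> = v e1 i \<oplus> (\<ominus> v e1 i)" using z e vi c_def by (simp add: l_minus)
    also have "\<dots> = \<zero>" using vi by (simp add: r_neg)
    finally show "finsum R (\<lambda>x. c x \<otimes> v x i) I = \<zero>" unfolding Ieq[symmetric] .
  qed
  have "\<forall>x\<in>I. c x = \<zero>" using spec[OF L[unfolded lin_indep_def], of c] cc sums by blast
  hence "c e1 = \<zero>" using e(1) by blast
  thus False using c_def by simp
qed

lemma li_cong:
  assumes "\<forall>e\<in>I. v e = v' e" "\<forall>e\<in>I. v e \<in> vecs R k"
  shows "lin_indep R k v I = lin_indep R k v' I"
proof -
  have eq: "\<And>c i. \<forall>e\<in>I. c e \<in> carrier R \<Longrightarrow> i < k \<Longrightarrow>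
     finsum R (\<lambda>e. c e \<otimes> v e i) I = finsum R (\<lambda>e. c e \<otimes> v' e i) I"
    using assms by (intro add.finprod_cong') (auto simp: vecs_def)
  show ?thesis unfolding lin_indep_def
  proof (intro iffI allI impI)
    fix c assume L: "\<forall>c. (\<forall>e\<in>I. c e \<in> carrier R) \<and> (\<forall>i<k. finsum R (\<lambda>e. c e \<otimes> v e i) I = \<zero>) \<longrightarrow> (\<forall>e\<in>I. c e = \<zero>)"
      and a: "(\<forall>e\<in>I. c e \<in> carrier R) \<and> (\<forall>i<k. finsum R (\<lambda>e. c e \<otimes> v' e i) I = \<zero>)"
    thus "\<forall>e\<in>I. c e = \<zero>" using eq by auto
  next
    fix c assume L: "\<forall>c. (\<forall>e\<in>I. c e \<in> carrier R) \<and> (\<forall>i<k. finsum R (\<lambda>e. c e \<otimes> v' e i) I = \<zero>) \<longrightarrow> (\<forall>e\<in>I. c e = \<zero>)"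
      and a: "(\<forall>e\<in>I. c e \<in> carrier R) \<and> (\<forall>i<k. finsum R (\<lambda>e. c e \<otimes> v e i) I = \<zero>)"
    thus "\<forall>e\<in>I. c e = \<zero>" using eq by auto
  qed
qed

end


definition pgrep :: "('f, 'm) ring_scheme \<Rightarrow> nat \<Rightarrow> (nat \<Rightarrow> 'f) set \<Rightarrow> (nat \<Rightarrow> 'f)" where
  "pgrep R k L = (SOME x. x \<in> vecs R k \<and> x \<noteq> zvec R \<and> L = vline R k x)"

lemma gr_PG: "gr (PG_matroid R k) = {vline R k x | x. x \<in> vecs R k \<and> x \<noteq> zvec R}"
  by (simp add: PG_matroid_def gr_def)
lemma ind_PG: "ind (PG_matroid R k) T = (T \<subseteq> gr (PG_matroid R k) \<and>
   (\<forall>w. (\<forall>L\<in>T. w L \<in> L \<and> w L \<noteq> zvec R) \<longrightarrow> lin_indep R k w T))"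
  by (simp add: PG_matroid_def gr_def ind_def)

lemma pgrep: "L \<in> gr (PG_matroid R k) \<Longrightarrow>
   pgrep R k L \<in> vecs R k \<and> pgrep R k L \<noteq> zvec R \<and> L = vline R k (pgrep R k L)"
proof -
  assume "L \<in> gr (PG_matroid R k)"
  then obtain x where "x \<in> vecs R k \<and> x \<noteq> zvec R \<and> L = vline R k x" unfolding gr_PG by blast
  thus ?thesis unfolding pgrep_def by (rule someI[where P="\<lambda>x. x \<in> vecs R k \<and> x \<noteq> zvec R \<and> L = vline R k x"])
qed

context field begin

lemma li_reindex:
  assumes inj: "inj_on g I" and wv: "\<forall>y\<in>g ` I. w y \<in> vecs R k"
  shows "lin_indep R k (\<lambda>e. w (g e)) I \<longleftrightarrow> lin_indep R k w (g ` I)"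
proof
  assume L1: "lin_indep R k (\<lambda>e. w (g e)) I"
  show "lin_indep R k w (g ` I)" unfolding lin_indep_def
  proof (intro allI impI)
    fix c assume a: "(\<forall>y\<in>g ` I. c y \<in> carrier R) \<and> (\<forall>i<k. finsum R (\<lambda>y. c y \<otimes> w y i) (g ` I) = \<zero>)"
    have cc: "\<forall>e\<in>I. c (g e) \<in> carrier R" using a by blast
    have sums: "\<forall>i<k. finsum R (\<lambda>e. c (g e) \<otimes> w (g e) i) I = \<zero>"
    proof (intro allI impI)
      fix i assume ik: "i < k"
      have "finsum R (\<lambda>y. c y \<otimes> w y i) (g ` I) = finsum R (\<lambda>e. c (g e) \<otimes> w (g e) i) I"
        using a wv ik inj by (intro finsum_reindex) (auto simp: vecs_def)
      thus "finsum R (\<lambda>e. c (g e) \<otimes> w (g e) i) I = \<zero>" using a ik by simp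
    qed
    have "\<forall>e\<in>I. c (g e) = \<zero>" using spec[OF L1[unfolded lin_indep_def], of "\<lambda>e. c (g e)"] cc sums by blast
    thus "\<forall>y\<in>g ` I. c y = \<zero>" by blast
  qed
next
  assume L2: "lin_indep R k w (g ` I)"
  show "lin_indep R k (\<lambda>e. w (g e)) I" unfolding lin_indep_def
  proof (intro allI impI)
    fix c assume a: "(\<forall>e\<in>I. c e \<in> carrier R) \<and> (\<forall>i<k. finsum R (\<lambda>e. c e \<otimes> w (g e) i) I = \<zero>)"
    define c' where "c' = (\<lambda>y. c (the_inv_into I g y))"
    have c'g: "\<forall>e\<in>I. c' (g e) = c e" using the_inv_into_f_f[OF inj] c'_def by simp
    have cc: "\<forall>y\<in>g ` I. c' y \<in> carrier R" using c'g a by auto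
    have sums: "\<forall>i<k. finsum R (\<lambda>y. c' y \<otimes> w y i) (g ` I) = \<zero>"
    proof (intro allI impI)
      fix i assume ik: "i < k"
      have "finsum R (\<lambda>y. c' y \<otimes> w y i) (g ` I) = finsum R (\<lambda>e. c' (g e) \<otimes> w (g e) i) I"
        using cc wv ik inj by (intro finsum_reindex) (auto simp: vecs_def)
      also have "\<dots> = finsum R (\<lambda>e. c e \<otimes> w (g e) i) I"
        using c'g a wv ik by (intro add.finprod_cong') (auto simp: vecs_def)
      finally show "finsum R (\<lambda>y. c' y \<otimes> w y i) (g ` I) = \<zero>" using a ik by simp
    qed
    have "\<forall>y\<in>g ` I. c' y = \<zero>" using spec[OF L2[unfolded lin_indep_def], of c'] cc sums by blast
    thus "\<forall>e\<in>I. c e = \<zero>" using c'g by auto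
  qed
qed

lemma li_scale:
  assumes aa: "\<forall>L\<in>T. a L \<in> carrier R \<and> a L \<noteq> \<zero>" and ww: "\<forall>L\<in>T. w L = vsmult R k (a L) (rr L)"
    and rv: "\<forall>L\<in>T. rr L \<in> vecs R k" and Lr: "lin_indep R k rr T"
  shows "lin_indep R k w T"
  unfolding lin_indep_def
proof (intro allI impI)
  fix d assume a: "(\<forall>L\<in>T. d L \<in> carrier R) \<and> (\<forall>i<k. finsum R (\<lambda>L. d L \<otimes> w L i) T = \<zero>)"
  have dc: "\<forall>L\<in>T. d L \<otimes> a L \<in> carrier R" using a aa by simp
  have sums: "\<forall>i<k. finsum R (\<lambda>L. (d L \<otimes> a L) \<otimes> rr L i) T = \<zero>"
  proof (intro allI impI)
    fix i assume ik: "i < k"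
    have "finsum R (\<lambda>L. (d L \<otimes> a L) \<otimes> rr L i) T = finsum R (\<lambda>L. d L \<otimes> w L i) T"
      using a aa ww rv ik by (intro add.finprod_cong') (auto simp: vecs_def vsmult_def m_assoc)
    thus "finsum R (\<lambda>L. (d L \<otimes> a L) \<otimes> rr L i) T = \<zero>" using a ik by simp
  qed
  have z: "\<forall>L\<in>T. d L \<otimes> a L = \<zero>" using spec[OF Lr[unfolded lin_indep_def], of "\<lambda>L. d L \<otimes> a L"] dc sums by blast
  show "\<forall>L\<in>T. d L = \<zero>"
  proof
    fix L assume LT: "L \<in> T"
    hence "d L = \<zero> \<or> a L = \<zero>" using integral z a aa by blast
    thus "d L = \<zero>" using aa LT by blast
  qed
qed

lemma vsmult_one: "x \<in> vecs R k \<Longrightarrow> vsmult R k \<one> x = x"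
  by (rule ext) (auto simp: vsmult_def vecs_def)

lemma in_vline: "x \<in> vecs R k \<Longrightarrow> x \<in> vline R k x"
  unfolding vline_def using vsmult_one by force

lemma vline_nz:
  assumes "x \<in> vecs R k" "y \<in> vline R k x" "y \<noteq> zvec R"
  shows "\<exists>a. a \<in> carrier R \<and> a \<noteq> \<zero> \<and> y = vsmult R k a x"
proof -
  obtain a where a: "a \<in> carrier R" "y = vsmult R k a x" using assms(2) unfolding vline_def by blast
  have "a \<noteq> \<zero>"
  proof
    assume "a = \<zero>"
    hence "y = zvec R" using a assms(1) by (auto simp: vsmult_def zvec_def vecs_def)
    thus False using assms(3) by simp
  qed
  thus ?thesis using a by blast
qed

lemma pg_ind:
  assumes T: "T \<subseteq> gr (PG_matroid R k)"
  shows "ind (PG_matroid R k) T \<longleftrightarrow> lin_indep R k (pgrep R k) T"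
proof
  assume "ind (PG_matroid R k) T"
  hence H: "\<forall>w. (\<forall>L\<in>T. w L \<in> L \<and> w L \<noteq> zvec R) \<longrightarrow> lin_indep R k w T" by (simp add: ind_PG)
  have "\<forall>L\<in>T. pgrep R k L \<in> L \<and> pgrep R k L \<noteq> zvec R"
  proof
    fix L assume "L \<in> T"
    hence p: "pgrep R k L \<in> vecs R k \<and> pgrep R k L \<noteq> zvec R \<and> L = vline R k (pgrep R k L)"
      using pgrep T by blast
    hence "pgrep R k L \<in> vline R k (pgrep R k L)" using in_vline by blast
    thus "pgrep R k L \<in> L \<and> pgrep R k L \<noteq> zvec R" using p by simp
  qed
  thus "lin_indep R k (pgrep R k) T" using H by blast
next
  assume Lr: "lin_indep R k (pgrep R k) T"
  have "\<forall>w. (\<forall>L\<in>T. w L \<in> L \<and> w L \<noteq> zvec R) \<longrightarrow> lin_indep R k w T"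
  proof (intro allI impI)
    fix w assume wL: "\<forall>L\<in>T. w L \<in> L \<and> w L \<noteq> zvec R"
    have "\<forall>L\<in>T. \<exists>a. a \<in> carrier R \<and> a \<noteq> \<zero> \<and> w L = vsmult R k a (pgrep R k L)"
    proof
      fix L assume LT: "L \<in> T"
      hence p: "pgrep R k L \<in> vecs R k \<and> pgrep R k L \<noteq> zvec R \<and> L = vline R k (pgrep R k L)"
        using pgrep T by blast
      have "w L \<in> vline R k (pgrep R k L)" using wL LT p by metis
      thus "\<exists>a. a \<in> carrier R \<and> a \<noteq> \<zero> \<and> w L = vsmult R k a (pgrep R k L)"
        using vline_nz p wL LT by blast
    qed
    then obtain a where a: "\<forall>L\<in>T. a L \<in> carrier R \<and> a L \<noteq> \<zero> \<and> w L = vsmult R k (a L) (pgrep R k L)"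
      by metis
    have rv: "\<forall>L\<in>T. pgrep R k L \<in> vecs R k" using pgrep T by blast
    show "lin_indep R k w T" by (rule li_scale[where a=a and rr="pgrep R k"]) (use a rv Lr in auto)
  qed
  thus "ind (PG_matroid R k) T" using T by (simp add: ind_PG)
qed

end


context field begin

lemma rep_MX:
  assumes mat: "matroid M"
    and sim: "is_simplification_set (delete M X) S"
    and iso: "matroid_iso (restrict (delete M X) S) (PG_matroid R k)"
  shows "\<exists>v. (\<forall>e\<in>gr M - X. v e \<in> vecs R k) \<and> (\<forall>J\<subseteq>gr M - X. ind M J \<longleftrightarrow> lin_indep R k v J)"
proof -
  let ?P = "gr (PG_matroid R k)"
  obtain f0 where bij: "bij_betw f0 S ?P" and f0i: "\<forall>I\<subseteq>S. ind (restrict (delete M X) S) I \<longleftrightarrow> ind (PG_matroid R k) (f0 ` I)"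
    using iso unfolding matroid_iso_def by auto
  have SE: "S \<subseteq> gr M - X" using sim unfolding is_simplification_set_def by simp
  have Sl: "\<forall>e\<in>S. ind M {e}" using sim unfolding is_simplification_set_def by simp
  have Sc: "\<forall>e\<in>gr M - X. ind M {e} \<longrightarrow> (\<exists>f\<in>S. e = f \<or> \<not> ind M {e, f})"
  proof (intro ballI impI)
    fix e assume e: "e \<in> gr M - X" "ind M {e}"
    have H: "\<forall>e\<in>gr (delete M X). ind (delete M X) {e} \<longrightarrow> (\<exists>f\<in>S. e = f \<or> \<not> ind (delete M X) {e, f})"
      using sim unfolding is_simplification_set_def by blast
    have "e \<in> gr (delete M X)" "ind (delete M X) {e}" using e by auto
    hence "\<exists>f\<in>S. e = f \<or> \<not> ind (delete M X) {e, f}" using H by blast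
    then obtain f where f: "f \<in> S" "e = f \<or> \<not> ind (delete M X) {e, f}" by blast
    have "{e,f} \<subseteq> gr M - X" using f(1) SE e(1) by blast
    hence "e = f \<or> \<not> ind M {e,f}" using f(2) by simp
    thus "\<exists>f\<in>S. e = f \<or> \<not> ind M {e, f}" using f(1) by blast
  qed
  define \<sigma> where "\<sigma> = (\<lambda>e. SOME s. s \<in> S \<and> (e = s \<or> \<not> ind M {e,s}))"
  have sig: "\<sigma> e \<in> S \<and> (e = \<sigma> e \<or> \<not> ind M {e, \<sigma> e})" if ee: "e \<in> gr M - X" "ind M {e}" for e
  proof -
    obtain s where "s \<in> S \<and> (e = s \<or> \<not> ind M {e,s})" using Sc ee by blast
    thus ?thesis unfolding \<sigma>_def by (rule someI[where P="\<lambda>s. s \<in> S \<and> (e = s \<or> \<not> ind M {e,s})"])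
  qed
  define v where "v = (\<lambda>e. if ind M {e} then pgrep R k (f0 (\<sigma> e)) else zvec R)"
  have f0P: "f0 s \<in> ?P" if "s \<in> S" for s using bij that bij_betwE by blast
  have pv: "pgrep R k (f0 s) \<in> vecs R k" if "s \<in> S" for s using pgrep[of "f0 s" R k] f0P[OF that] by blast
  have vv: "\<forall>e\<in>gr M - X. v e \<in> vecs R k"
  proof
    fix e assume e: "e \<in> gr M - X"
    show "v e \<in> vecs R k"
    proof (cases "ind M {e}")
      case True
      hence "f0 (\<sigma> e) \<in> ?P" using f0P sig e by blast
      thus ?thesis using pgrep[of "f0 (\<sigma> e)" R k] True v_def by simp
    next
      case False
      thus ?thesis by (simp add: v_def zvec_def vecs_def)
    qed
  qed
  have main: "ind M J \<longleftrightarrow> lin_indep R k v J" if J: "J \<subseteq> gr M - X" for J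
  proof -
    have fJ: "finite J" using J fin[OF mat] finite_subset by blast
    have vJ: "\<forall>x\<in>J. v x \<in> vecs R k" using vv J by blast
    have sigJ: "\<And>e. e \<in> J \<Longrightarrow> ind M {e} \<Longrightarrow> ind M {\<sigma> e} \<and> (e = \<sigma> e \<or> \<not> ind M {e, \<sigma> e})"
      using sig Sl J by blast
    have JE: "J \<subseteq> gr M" using J by blast
    note SI = simp_ind[OF mat JE sigJ]
    show ?thesis
    proof (cases "\<forall>e\<in>J. ind M {e}")
      case False
      then obtain e where e: "e \<in> J" "\<not> ind M {e}" by blast
      have "\<not> lin_indep R k v J"
        by (rule li_zero[OF fJ e(1) _ vJ]) (use e(2) in \<open>simp add: v_def zvec_def\<close>)
      thus ?thesis using SI False by blast
    next
      case loops: True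
      show ?thesis
      proof (cases "inj_on \<sigma> J")
        case False
        then obtain e1 e2 where e: "e1 \<in> J" "e2 \<in> J" "\<sigma> e1 = \<sigma> e2" "e1 \<noteq> e2"
          unfolding inj_on_def by blast
        have "v e1 = v e2" using e loops v_def by simp
        hence "\<not> lin_indep R k v J" using li_dup[OF fJ e(1) e(2) e(4) _ vJ] by blast
        thus ?thesis using SI False by blast
      next
        case inj: True
        have sJ: "\<sigma> ` J \<subseteq> S"
        proof
          fix s assume "s \<in> \<sigma> ` J"
          then obtain e where e: "e \<in> J" "s = \<sigma> e" by blast
          thus "s \<in> S" using sig[of e] J loops by blast
        qed
        have "ind M J \<longleftrightarrow> ind M (\<sigma> ` J)" using SI loops inj by blast
        also have "\<dots> \<longleftrightarrow> ind (restrict (delete M X) S) (\<sigma> ` J)" using sJ SE by auto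
        also have "\<dots> \<longleftrightarrow> ind (PG_matroid R k) (f0 ` \<sigma> ` J)" using f0i sJ by blast
        also have "\<dots> \<longleftrightarrow> lin_indep R k (pgrep R k) (f0 ` \<sigma> ` J)"
        proof (rule pg_ind)
          show "f0 ` \<sigma> ` J \<subseteq> ?P" using f0P sJ by blast
        qed
        also have "f0 ` \<sigma> ` J = (\<lambda>e. f0 (\<sigma> e)) ` J" by (simp add: image_image)
        also have "lin_indep R k (pgrep R k) ((\<lambda>e. f0 (\<sigma> e)) ` J) \<longleftrightarrow> lin_indep R k (\<lambda>e. pgrep R k (f0 (\<sigma> e))) J"
        proof (rule li_reindex[symmetric])
          have "inj_on f0 S" using bij by (simp add: bij_betw_def)
          hence "inj_on f0 (\<sigma> ` J)" using inj_on_subset sJ by blast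
          thus "inj_on (\<lambda>e. f0 (\<sigma> e)) J" using inj comp_inj_on[of \<sigma> J f0] by (simp add: comp_def)
          show "\<forall>y\<in>(\<lambda>e. f0 (\<sigma> e)) ` J. pgrep R k y \<in> vecs R k" using pv sJ by blast
        qed
        also have "\<dots> \<longleftrightarrow> lin_indep R k v J"
        proof (rule li_cong)
          show "\<forall>e\<in>J. pgrep R k (f0 (\<sigma> e)) = v e" using loops v_def by simp
          show "\<forall>e\<in>J. pgrep R k (f0 (\<sigma> e)) \<in> vecs R k" using pv sJ by blast
        qed
        finally show ?thesis .
      qed
    qed
  qed
  show ?thesis using vv main by blast
qed

end


context fixes M :: "'a matroid" assumes mat: "matroid M"
begin

lemma drop:
  assumes "U \<subseteq> T" "T \<inter> X = {}"
  shows "mrank M (T \<union> X) + mrank M U \<le> mrank M (U \<union> X) + mrank M T"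
proof -
  have e1: "(U \<union> X) \<union> T = T \<union> X" using assms by blast
  have e2: "(U \<union> X) \<inter> T = U" using assms by blast
  have "mrank M ((U \<union> X) \<union> T) + mrank M ((U \<union> X) \<inter> T) \<le> mrank M (U \<union> X) + mrank M T"
    by (rule submod[OF mat])
  thus ?thesis unfolding e1 e2 .
qed

lemma key_equiv:
  assumes UT: "U \<subseteq> T0" and TX: "T0 \<inter> X = {}" and IT: "I \<subseteq> T0" and IU: "I \<inter> U = {}"
    and fI: "finite I"
    and aeq: "mrank M (T0 \<union> X) - mrank M T0 = mrank M (U \<union> X) - mrank M U"
    and B: "B \<subseteq> U" "ind M B" "card B = mrank M U"
  shows "mrank M ((I \<union> U) \<union> X) = card I + mrank M (U \<union> X) \<longleftrightarrow> ind M (I \<union> B)"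
proof -
  define T where "T = I \<union> U"
  have d1: "mrank M (T \<union> X) + mrank M U \<le> mrank M (U \<union> X) + mrank M T"
    by (rule drop) (use T_def TX UT IT in auto)
  have d2: "mrank M (T0 \<union> X) + mrank M T \<le> mrank M (T \<union> X) + mrank M T0"
    by (rule drop) (use T_def TX UT IT in auto)
  have m1: "mrank M T \<le> mrank M (T \<union> X)" by (rule rank_mono[OF mat]) auto
  have m2: "mrank M U \<le> mrank M (U \<union> X)" by (rule rank_mono[OF mat]) auto
  have m3: "mrank M T0 \<le> mrank M (T0 \<union> X)" by (rule rank_mono[OF mat]) auto
  have t1: "mrank M (T \<union> X) = mrank M T + (mrank M (U \<union> X) - mrank M U)"
    using d1 d2 m1 m2 m3 aeq by linarith
  have t2: "mrank M (U \<union> X) = mrank M U + (mrank M (U \<union> X) - mrank M U)" using m2 by simp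
  have "mrank M ((I \<union> U) \<union> X) = card I + mrank M (U \<union> X) \<longleftrightarrow> mrank M (I \<union> U) = card I + mrank M U"
  proof -
    have t1': "mrank M ((I \<union> U) \<union> X) = mrank M (I \<union> U) + (mrank M (U \<union> X) - mrank M U)"
      using t1 T_def by simp
    show ?thesis using t1' t2 by linarith
  qed
  also have "mrank M (I \<union> U) = mrank M (I \<union> B)" using basis_span[OF mat B] .
  also have "card I + mrank M U = card (I \<union> B)"
  proof -
    have fB: "finite B" using indfin[OF mat B(2)] .
    have "I \<inter> B = {}" using IU B(1) by blast
    thus ?thesis using card_Un_disjoint[OF fI fB] B(3) by simp
  qed
  also have "mrank M (I \<union> B) = card (I \<union> B) \<longleftrightarrow> ind M (I \<union> B)"
    using rank_ind[OF mat] ind_rank[OF mat] fI indfin[OF mat B(2)] by blast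
  finally show ?thesis .
qed

end

theorem lemma4p1:
  fixes q h :: nat and M :: "'a matroid" and X :: "'a set"
  assumes "prime_power q"
    and "matroid M"
    and "X \<subseteq> gr M"
    and "mrank M X \<le> h"
    and "\<exists>S. is_simplification_set (delete M X) S \<and>
              iso_PG (restrict (delete M X) S) (mrank M (gr M)) q"
  shows "\<not> has_stack_restriction q (h + 1) (contract M X)"
proof
  note mat = assms(2)
  let ?E = "gr M"
  assume "has_stack_restriction q (h + 1) (contract M X)"
  then obtain F0 t where F0: "F0 \<subseteq> ?E - X" and st: "is_stack q (h + 1) t (restrict (contract M X) F0)"
    unfolding has_stack_restriction_def by auto
  define S' where "S' = restrict (contract M X) F0"
  obtain Fs where Fs: "\<forall>i<h+1. Fs i \<subseteq> F0" "\<forall>i<h+1. \<forall>j<h+1. i \<noteq> j \<longrightarrow> Fs i \<inter> Fs j = {}"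
    and NR: "\<forall>i<h+1. \<not> representable q (restrict (contract S' (\<Union>j<i. Fs j)) (Fs i))"
    using st unfolding is_stack_def S'_def Let_def by auto
  obtain S where sim: "is_simplification_set (delete M X) S"
    and ip: "iso_PG (restrict (delete M X) S) (mrank M (gr M)) q" using assms(5) by blast
  obtain R :: "nat ring" where fR: "field R" and finR: "finite (carrier R)" and cR: "card (carrier R) = q"
    and iso: "matroid_iso (restrict (delete M X) S) (PG_matroid R (mrank M (gr M)))"
    using ip unfolding iso_PG_def by blast
  define k where "k = mrank M (gr M)"
  obtain v where vv: "\<forall>e\<in>?E - X. v e \<in> vecs R k" and vi: "\<forall>J\<subseteq>?E - X. ind M J \<longleftrightarrow> lin_indep R k v J"
    using field.rep_MX[OF fR mat sim iso] k_def by blast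
  define U where "U = (\<lambda>i. \<Union>j<i. Fs j)"
  define a where "a = (\<lambda>i. mrank M (U i \<union> X) - mrank M (U i))"
  have UF: "U i \<subseteq> F0" if "i \<le> h + 1" for i
    unfolding U_def
  proof (rule UN_least)
    fix j assume "j \<in> {..<i}"
    hence "j < h + 1" using that by simp
    thus "Fs j \<subseteq> F0" using Fs(1) by blast
  qed
  have UX: "U i \<inter> X = {}" if "i \<le> h + 1" for i using UF[OF that] F0 by blast
  have USuc: "U (Suc i) = U i \<union> Fs i" for i unfolding U_def by (simp add: lessThan_Suc sup_commute)
  have amono: "a (Suc i) \<le> a i" if "i < h + 1" for i
  proof -
    have d: "mrank M (U (Suc i) \<union> X) + mrank M (U i) \<le> mrank M (U i \<union> X) + mrank M (U (Suc i))"
    proof (rule drop[OF mat])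
      show "U i \<subseteq> U (Suc i)" using USuc by blast
      show "U (Suc i) \<inter> X = {}" using UX[of "Suc i"] that by simp
    qed
    have "mrank M (U (Suc i)) \<le> mrank M (U (Suc i) \<union> X)" by (rule rank_mono[OF mat]) auto
    moreover have "mrank M (U i) \<le> mrank M (U i \<union> X)" by (rule rank_mono[OF mat]) auto
    ultimately show ?thesis using d unfolding a_def by linarith
  qed
  have "\<exists>i<h+1. a (Suc i) = a i"
  proof (rule ccontr)
    assume "\<not> (\<exists>i<h+1. a (Suc i) = a i)"
    hence lt: "\<forall>i<h+1. a (Suc i) < a i" using amono le_neq_implies_less by blast
    have ind: "n \<le> h + 1 \<Longrightarrow> a n + n \<le> a 0" for n
    proof (induction n)
      case 0 then show ?case by simp
    next
      case (Suc n)
      hence "a (Suc n) < a n" using lt by simp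
      thus ?case using Suc by simp
    qed
    have "a (h+1) + (h+1) \<le> a 0" using ind[of "h+1"] by simp
    moreover have "a 0 = mrank M X"
    proof -
      have "mrank M {} = 0" using rank_le_card[OF mat, of "{}"] by simp
      thus ?thesis unfolding a_def U_def by simp
    qed
    ultimately show False using assms(4) by linarith
  qed
  then obtain i where ih: "i < h + 1" and aeq: "a (Suc i) = a i" by blast
  obtain B where B: "B \<subseteq> U i" "ind M B" "card B = mrank M (U i)" using rank_obtain[OF mat] by blast
  have UiE: "U i \<subseteq> ?E - X" using UF[of i] ih F0 by auto
  have FiE: "Fs i \<subseteq> ?E - X" using Fs(1) ih F0 by blast
  have fE: "finite ?E" using fin[OF mat] .
  have fB: "finite B" using indfin[OF mat B(2)] .
  have fFi: "finite (Fs i)" using FiE fE finite_subset by blast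
  have FiU: "Fs i \<inter> U i = {}"
  proof -
    have "\<forall>j<i. Fs i \<inter> Fs j = {}" using Fs(2) ih by auto
    thus ?thesis unfolding U_def by blast
  qed
  have BD: "B \<inter> Fs i = {}" using FiU B(1) by blast
  have vBD: "\<forall>e\<in>B \<union> Fs i. v e \<in> vecs R k" using vv B(1) UiE FiE by blast
  have liB: "lin_indep R k v B" using vi B(1,2) UiE by blast
  obtain w where wv: "\<forall>e\<in>Fs i. w e \<in> vecs R k" and wi: "\<forall>I\<subseteq>Fs i. lin_indep R k w I \<longleftrightarrow> lin_indep R k v (I \<union> B)"
    using field.contract_vec[OF fR fB fFi BD vBD liB] by blast
  define N where "N = restrict (contract S' (U i)) (Fs i)"
  have "representable q N"
    unfolding representable_def
  proof (intro exI conjI)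
    show "field R" "finite (carrier R)" "card (carrier R) = q" by fact+
    show "\<forall>e\<in>gr N. w e \<in> vecs R k" using wv N_def by simp
    show "\<forall>I\<subseteq>gr N. ind N I \<longleftrightarrow> lin_indep R k w I"
    proof (intro allI impI)
      fix I assume "I \<subseteq> gr N"
      hence IF: "I \<subseteq> Fs i" using N_def by simp
      have fI: "finite I" using IF fFi finite_subset by blast
      have IUF: "I \<union> U i \<subseteq> F0" using IF Fs(1) ih UF[of i] by auto
      have r1: "mrank S' (I \<union> U i) = mrank M ((I \<union> U i) \<union> X) - mrank M X"
        unfolding S'_def by (rule rankS[OF mat F0 IUF])
      have r2: "mrank S' (U i) = mrank M (U i \<union> X) - mrank M X"
        unfolding S'_def by (rule rankS[OF mat F0]) (use UF[of i] ih in auto)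
      have m1: "mrank M X \<le> mrank M (U i \<union> X)" by (rule rank_mono[OF mat]) auto
      have m2: "mrank M (U i \<union> X) \<le> mrank M ((I \<union> U i) \<union> X)" by (rule rank_mono[OF mat]) auto
      have sub: "I \<subseteq> gr S' - U i" using IF Fs(1) ih FiU S'_def by auto
      have "ind N I \<longleftrightarrow> mrank S' (I \<union> U i) = card I + mrank S' (U i)"
        using IF sub N_def by simp
      also have "\<dots> \<longleftrightarrow> mrank M ((I \<union> U i) \<union> X) = card I + mrank M (U i \<union> X)"
        using r1 r2 m1 m2 by linarith
      also have "\<dots> \<longleftrightarrow> ind M (I \<union> B)"
      proof (rule key_equiv[OF mat _ _ _ _ fI _ B])
        show "U i \<subseteq> U (Suc i)" using USuc by blast
        show "U (Suc i) \<inter> X = {}" using UX ih by simp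
        show "I \<subseteq> U (Suc i)" using USuc IF by blast
        show "I \<inter> U i = {}" using IF FiU by blast
        show "mrank M (U (Suc i) \<union> X) - mrank M (U (Suc i)) = mrank M (U i \<union> X) - mrank M (U i)"
          using aeq a_def by simp
      qed
      also have "\<dots> \<longleftrightarrow> lin_indep R k v (I \<union> B)"
        using vi IF FiE B(1) UiE by (meson Un_least order_trans)
      also have "\<dots> \<longleftrightarrow> lin_indep R k w I" using wi IF by blast
      finally show "ind N I \<longleftrightarrow> lin_indep R k w I" .
    qed
  qed
  thus False using NR ih N_def U_def by blast
qed


end
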